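(* Let $r,a,b\in\mathbb{N}$ with $b\ge2$ and $a=b(b-1)$. Then for any $\varepsilon>0$ and any completely multiplicative functions $f_1,\ldots,f_r:\mathbb{N}\to\mathbb{S}^1$, the set $$\mathcal{A}_{a,b,a,b-1}(f_1,\ldots,f_r;\varepsilon):=\{n\in\mathbb{N}: |f_j(an+b)-f_j(an+b-1)|<\varepsilon \text{ for all } 1\le j\le r\}$$ has positive lower asymptotic density.
   Context: $\mathbb{N}=\{1,2,\dots\}$, $\mathbb{S}^1$ the unit circle; completely multiplicative means $f(mn)=f(m)f(n)$. The lower asymptotic density of $A\subseteq\mathbb{N}$ is $\underline{d}(A)=\liminf_{N\to\infty}|A\cap\{1,\dots,N\}|/N$. *)

theory Defs
  imports "HOL-Analysis.Analysis"
begin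

text \<open>Completely multiplicative function N -> S^1, with N = {1,2,...}; values at 0 are irrelevant.\<close>
definition cm_unit :: "(nat \<Rightarrow> complex) \<Rightarrow> bool" where
  "cm_unit f \<longleftrightarrow> (\<forall>n\<ge>1. norm (f n) = 1) \<and> (\<forall>m\<ge>1. \<forall>n\<ge>1. f (m * n) = f m * f n)"

definition lower_density :: "nat set \<Rightarrow> real" where
  "lower_density A = real_of_ereal (liminf (\<lambda>N. ereal (real (card (A \<inter> {1..N})) / real N)))"

end

theory Submission
  imports Defs
begin


definition bcl :: "nat \<Rightarrow> nat set \<Rightarrow> bool" where
  "bcl b C \<longleftrightarrow> finite C \<and> (\<forall>x\<in>C. 0 < x) \<and>
     (\<forall>x\<in>C. \<forall>y\<in>C. x < y \<longrightarrow> b*(y-x) dvd x \<and> (b-1)*(y-x) dvd y)"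

lemma lincong:
  fixes M R T :: nat
  assumes "0 < M" "0 < R" "gcd M R dvd T"
  shows "\<exists>s>0. R dvd M * s + T"
proof -
  obtain x y where xy: "M * x = R * y + gcd M R" using bezout_nat[of M R] assms(1) by auto
  obtain k where k: "T = gcd M R * k" using assms(3) by (auto elim: dvdE)
  obtain R' where R': "R = Suc R'" using assms(2) by (cases R) auto
  define s where "s = x*k*R' + R"
  have "M * s + T = (M*x)*k*R' + M*R + T" by (simp add: s_def algebra_simps)
  also have "\<dots> = (R*y*k + T)*R' + M*R + T" using xy k by (simp add: algebra_simps)
  also have "\<dots> = R*(y*k*R' + T + M)" using R' by (simp add: algebra_simps)
  finally have "R dvd M * s + T" by simp
  moreover have "s > 0" using assms(2) by (simp add: s_def)
  ultimately show ?thesis by blast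
qed

lemma clique_step:
  fixes b :: nat and Y :: "nat set"
  assumes b2: "b \<ge> 2" and Y: "bcl b Y"
    and D: "\<forall>x\<in>Y. \<forall>y\<in>Y. x < y \<longrightarrow> (y-x) dvd D1*D2"
    and D1: "D1 dvd (b-1)^N" and D2: "coprime D2 (b-1)" "D2 > 0"
  shows "\<exists>X D1' D2' N'. bcl b X \<and> card X = Suc (card Y) \<and>
     (\<forall>x\<in>X. \<forall>y\<in>X. x < y \<longrightarrow> (y-x) dvd D1'*D2') \<and> D1' dvd (b-1)^N' \<and>
     coprime D2' (b-1) \<and> D2' > 0"
proof -
  define c where "c = b - 1"
  have c0: "c > 0" and bc: "b = c + 1" using b2 by (auto simp: c_def)
  have finY: "finite Y" and posY: "\<forall>y\<in>Y. 0 < y"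
    and clY: "\<forall>x\<in>Y. \<forall>y\<in>Y. x < y \<longrightarrow> b*(y-x) dvd x \<and> c*(y-x) dvd y"
    using Y by (auto simp: bcl_def c_def)
  define T where "T = D2"
  define m where "m = (\<lambda>y. c*y + b*T)"
  define M where "M = (\<Prod>y\<in>Y. m y)"
  define R where "R = c^2 * D1 * D2"
  have T0: "T > 0" using D2 by (simp add: T_def)
  have m0: "\<And>y. m y > 0" using T0 b2 by (simp add: m_def)
  have M0: "M > 0" using m0 finY by (simp add: M_def)
  have D10: "D1 > 0" using D1 c0 c_def by (metis dvd_0_left_iff gr0I power_not_zero)
  have R0: "R > 0" using D10 D2 c0 by (simp add: R_def)
  have cbT: "coprime (b*T) c"
  proof -
    have "coprime b c" by (simp add: bc)
    moreover have "coprime T c" using D2 by (simp add: T_def c_def)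
    ultimately show ?thesis by simp
  qed
  have cm: "\<And>y. coprime (m y) c"
  proof -
    fix y
    have "gcd (m y) c = gcd (b*T) c" unfolding m_def
      by (metis add.commute gcd_add_mult mult.commute gcd.commute)
    then show "coprime (m y) c" using cbT by (simp add: coprime_iff_gcd_eq_1)
  qed
  have cM: "coprime M c" unfolding M_def using cm by (simp add: prod_coprime_left)
  have "coprime M (c^(N+2))" using cM by simp
  moreover have "c^2*D1 dvd c^(N+2)"
  proof -
    have "c^2*D1 dvd c^2 * c^N" using D1 by (simp add: c_def)
    also have "c^2 * c^N = c^(N+2)" by (simp add: power_add mult.commute power2_eq_square)
    finally show ?thesis .
  qed
  ultimately have cM2: "coprime M (c^2*D1)" using coprime_divisors[of M M "c^2*D1" "c^(N+2)"] by simp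
  have "gcd M R = gcd M D2" unfolding R_def by (rule gcd_mult_right_left_cancel[OF cM2])
  then have "gcd M R dvd T" by (simp add: T_def)
  then obtain s where s0: "s > 0" and sR: "R dvd M * s + T" using lincong[OF M0 R0] by blast
  define Q where "Q = M * s"
  have Q0: "Q > 0" using M0 s0 by (simp add: Q_def)
  have "c dvd R" by (simp add: R_def power2_eq_square)
  then have "c dvd M * s + T" using sR by (rule dvd_trans)
  then have "c dvd T + Q" by (simp add: Q_def add.commute)
  define V where "V = (T + Q) div c"
  have V: "c * V = T + Q" using \<open>c dvd T + Q\<close> by (simp add: V_def)
  have "c * (c*D1*D2) = R" by (simp add: R_def power2_eq_square)
  then have "c * (c*D1*D2) dvd c * V" using sR V by (simp add: Q_def add.commute)
  then have DV: "c*D1*D2 dvd V" using c0 by simp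
  define L where "L = b * Q"
  define e where "e = (\<lambda>y. L + m y)"
  have e_eq: "\<And>y. e y = c * (b*V + y)"
  proof -
    fix y
    have "e y = b*(T+Q) + c*y" by (simp add: e_def L_def m_def algebra_simps)
    also have "\<dots> = b*(c*V) + c*y" by (simp only: V)
    also have "\<dots> = c*(b*V + y)" by (simp add: algebra_simps)
    finally show "e y = c * (b*V + y)" .
  qed
  have e_mono: "\<And>x y. x < y \<Longrightarrow> e x < e y" using c0 by (simp add: e_eq)
  have "strict_mono e" by (rule strict_monoI) (rule e_mono)
  then have e_inj: "inj e" by (rule strict_mono_imp_inj_on)
  have Le: "\<And>y. L < e y" using m0 by (simp add: e_def)
  have mM: "\<And>y. y \<in> Y \<Longrightarrow> m y dvd M" unfolding M_def
    using finY by (rule dvd_prodI)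
  have mQ: "\<And>y. y \<in> Y \<Longrightarrow> m y dvd Q" unfolding Q_def using mM by (rule dvd_mult2)
  define X where "X = insert L (e ` Y)"
  have cardX: "card X = Suc (card Y)"
  proof -
    have "L \<notin> e ` Y" using Le by (metis imageE less_irrefl)
    then show ?thesis using finY e_inj by (simp add: X_def card_image inj_on_subset)
  qed
  have inner: "b*(e y - e x) dvd e x \<and> c*(e y - e x) dvd e y" if xy: "x \<in> Y" "y \<in> Y" "x < y" for x y
  proof -
    have d: "e y - e x = c*(y - x)" using xy by (simp add: e_eq algebra_simps diff_mult_distrib2)
    have h1: "b*(y-x) dvd x" and h2: "c*(y-x) dvd y" using clY xy by auto
    have dD: "(y-x) dvd D1*D2" using D xy by auto
    have "(y - x) dvd V" using dD DV by (metis dvd_mult_right mult.assoc dvd_trans)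
    then have "b*(y-x) dvd b*V" by simp
    then have g1: "b*(y-x) dvd b*V + x" using h1 by simp
    have "c*(y-x) dvd c*(D1*D2)" using dD by simp
    then have "c*(y-x) dvd V" using DV by (metis dvd_trans mult.assoc)
    then have "c*(y-x) dvd b*V" by simp
    then have g2: "c*(y-x) dvd b*V + y" using h2 by simp
    show ?thesis unfolding d using g1 g2 by (simp add: e_eq mult.left_commute)
  qed
  have outer: "b*(e y - L) dvd L \<and> c*(e y - L) dvd e y" if y: "y \<in> Y" for y
  proof -
    have d: "e y - L = m y" by (simp add: e_def)
    have "m y dvd L" using mQ[OF y] by (simp add: L_def)
    then have g1: "b * m y dvd L" using mQ[OF y] by (simp add: L_def)
    have "m y dvd e y" using \<open>m y dvd L\<close> by (simp add: e_def)
    then have "m y dvd c*(b*V + y)" by (simp add: e_eq)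
    then have "m y dvd b*V + y" using cm[of y] by (simp add: coprime_dvd_mult_right_iff)
    then have g2: "c * m y dvd e y" by (simp add: e_eq)
    show ?thesis using g1 g2 d by simp
  qed
  have posX: "\<forall>x\<in>X. 0 < x"
  proof
    fix x assume "x \<in> X"
    moreover have "0 < L" using Q0 b2 by (simp add: L_def)
    ultimately show "0 < x" using Le unfolding X_def
      by (auto intro: less_trans[of 0 L])
  qed
  have pairX: "\<forall>x\<in>X. \<forall>y\<in>X. x < y \<longrightarrow> b*(y-x) dvd x \<and> (b-1)*(y-x) dvd y"
  proof (intro ballI impI)
    fix x y assume xX: "x \<in> X" and yX: "y \<in> X" and xy: "x < y"
    show "b*(y-x) dvd x \<and> (b-1)*(y-x) dvd y"
    proof (cases "x = L")
      case True
      then have "y \<noteq> L" using xy by simp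
      then obtain y0 where "y0 \<in> Y" "y = e y0" using yX by (auto simp: X_def)
      then show ?thesis using outer True by (simp add: c_def)
    next
      case False
      then obtain x0 where x0: "x0 \<in> Y" "x = e x0" using xX by (auto simp: X_def)
      have "y \<noteq> L" using Le xy x0 by (metis not_less_iff_gr_or_eq)
      then obtain y0 where y0: "y0 \<in> Y" "y = e y0" using yX by (auto simp: X_def)
      have "x0 < y0" using xy x0 y0 e_mono by (metis not_less_iff_gr_or_eq)
      then show ?thesis using inner x0 y0 by (simp add: c_def)
    qed
  qed
  have bclX: "bcl b X" unfolding bcl_def using posX pairX finY by (simp add: X_def)
  have diffs: "\<forall>x\<in>X. \<forall>y\<in>X. x < y \<longrightarrow> (y-x) dvd (c*D1)*(D2*M)"
  proof (intro ballI impI)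
    fix x y assume xX: "x \<in> X" and yX: "y \<in> X" and xy: "x < y"
    show "(y-x) dvd (c*D1)*(D2*M)"
    proof (cases "x = L")
      case True
      then have "y \<noteq> L" using xy by simp
      then obtain y0 where y0: "y0 \<in> Y" "y = e y0" using yX by (auto simp: X_def)
      have "m y0 dvd M" unfolding M_def using finY y0 by (simp add: dvd_prodI)
      then show ?thesis using True y0 by (simp add: e_def)
    next
      case False
      then obtain x0 where x0: "x0 \<in> Y" "x = e x0" using xX by (auto simp: X_def)
      have "y \<noteq> L" using Le xy x0 by (metis not_less_iff_gr_or_eq)
      then obtain y0 where y0: "y0 \<in> Y" "y = e y0" using yX by (auto simp: X_def)
      have "x0 < y0" using xy x0 y0 e_mono by (metis not_less_iff_gr_or_eq)
      then have "(y0 - x0) dvd D1*D2" using D x0 y0 by auto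
      then have "(y0-x0) dvd D1*D2*M" by (rule dvd_mult2)
      then have "c*(y0-x0) dvd c*(D1*D2*M)" by (rule mult_dvd_mono[OF dvd_refl])
      moreover have "y - x = c*(y0-x0)" using x0 y0 \<open>x0 < y0\<close>
        by (simp add: e_eq algebra_simps diff_mult_distrib2)
      ultimately show ?thesis by (simp add: mult.assoc mult.left_commute)
    qed
  qed
  have "c*D1 dvd (b-1)^(Suc N)" using D1 by (simp add: c_def)
  moreover have "coprime (D2*M) (b-1)" using D2 cM by (simp add: c_def)
  moreover have "D2*M > 0" using D2 M0 by simp
  ultimately show ?thesis using bclX cardX diffs by blast
qed

lemma clique_exists:
  assumes "b \<ge> 2"
  shows "\<exists>C. bcl b C \<and> card C = Suc k"
proof -
  have "\<exists>C D1 D2 N. bcl b C \<and> card C = Suc k \<and>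
     (\<forall>x\<in>C. \<forall>y\<in>C. x < y \<longrightarrow> (y-x) dvd D1*D2) \<and> D1 dvd (b-1)^N \<and>
     coprime D2 (b-1) \<and> D2 > 0"
  proof (induction k)
    case 0
    have "bcl b {1}" by (simp add: bcl_def)
    then show ?case by (intro exI[of _ "{1}"] exI[of _ 1] exI[of _ 1] exI[of _ 0]) auto
  next
    case (Suc k)
    then obtain C D1 D2 N where h: "bcl b C" "card C = Suc k"
      "\<forall>x\<in>C. \<forall>y\<in>C. x < y \<longrightarrow> (y-x) dvd D1*D2" "D1 dvd (b-1)^N"
      "coprime D2 (b-1)" "D2 > 0" by blast
    from clique_step[OF assms h(1) h(3) h(4) h(5) h(6)] h(2) show ?case by auto
  qed
  then show ?thesis by blast
qed



lemma cm_mult: "cm_unit f \<Longrightarrow> m \<ge> 1 \<Longrightarrow> n \<ge> 1 \<Longrightarrow> f (m*n) = f m * f n"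
  by (simp add: cm_unit_def)

lemma cm_norm: "cm_unit f \<Longrightarrow> n \<ge> 1 \<Longrightarrow> cmod (f n) = 1"
  by (simp add: cm_unit_def)

lemma cm_nz: "cm_unit f \<Longrightarrow> n \<ge> 1 \<Longrightarrow> f n \<noteq> 0"
  using cm_norm by fastforce

lemma key_identity:
  fixes f :: "nat \<Rightarrow> complex" and q A A' :: nat
  assumes f: "cm_unit f" and q: "q \<ge> 1" and A: "A \<ge> 2" and A': "A' \<ge> 2"
    and rel: "q * A' = (q+1) * A"
  shows "cmod (f (q*(A'-1)) - f ((q+1)*(A-1))) = cmod (f A / f (A-1) - f A' / f (A'-1))"
proof -
  have e1: "f q * f A' = f (q+1) * f A"
    using cm_mult[OF f, of q A'] cm_mult[OF f, of "q+1" A] rel q A A' by simp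
  have u1: "f (q*(A'-1)) = f q * f (A'-1)" using cm_mult[OF f, of q "A'-1"] q A' by simp
  have u2: "f ((q+1)*(A-1)) = f (q+1) * f (A-1)" using cm_mult[OF f, of "q+1" "A-1"] A by simp
  define X where "X = f A"
  define Y where "Y = f (A-1)"
  define X' where "X' = f A'"
  define Y' where "Y' = f (A'-1)"
  define \<alpha> where "\<alpha> = f q"
  define \<beta> where "\<beta> = f (q+1)"
  have nX: "cmod X = 1" "cmod Y = 1" "cmod X' = 1" "cmod Y' = 1" "cmod \<beta> = 1"
    using cm_norm[OF f] A A' unfolding X_def Y_def X'_def Y'_def \<beta>_def by auto
  then have nz: "X \<noteq> 0" "Y \<noteq> 0" "X' \<noteq> 0" "Y' \<noteq> 0" "\<beta> \<noteq> 0" by auto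
  have al: "\<alpha> = \<beta> * X / X'" using e1 nz by (simp add: \<alpha>_def \<beta>_def X_def X'_def field_simps)
  have eq: "\<alpha> * Y' - \<beta> * Y = (X/Y - X'/Y') * (\<beta>*Y*Y'/X')"
    using nz by (simp add: al field_simps)
  have "cmod (\<beta>*Y*Y'/X') = 1" using nX by (simp add: norm_mult norm_divide)
  moreover have "cmod (\<alpha> * Y' - \<beta> * Y) = cmod (X/Y - X'/Y') * cmod (\<beta>*Y*Y'/X')"
    unfolding eq by (rule norm_mult)
  ultimately have "cmod (\<alpha> * Y' - \<beta> * Y) = cmod (X/Y - X'/Y')" by simp
  then show ?thesis unfolding u1 u2 \<alpha>_def \<beta>_def X_def Y_def X'_def Y'_def .
qed

definition cell :: "nat \<Rightarrow> complex \<Rightarrow> int \<times> int" where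
  "cell m z = (\<lfloor>real m * Re z\<rfloor>, \<lfloor>real m * Im z\<rfloor>)"

lemma floor_eq_close: "\<lfloor>x::real\<rfloor> = \<lfloor>y\<rfloor> \<Longrightarrow> \<bar>x - y\<bar> < 1"
  by linarith

lemma cell_close:
  assumes m: "m > 0" and e: "cell m z = cell m z'"
  shows "cmod (z - z') < 2 / real m"
proof -
  have h1: "\<bar>real m * Re z - real m * Re z'\<bar> < 1" and h2: "\<bar>real m * Im z - real m * Im z'\<bar> < 1"
    using e floor_eq_close by (auto simp: cell_def)
  have mp: "real m > 0" using m by simp
  have "\<bar>real m * (Re z - Re z')\<bar> < 1" using h1 by (simp add: right_diff_distrib)
  then have "real m * \<bar>Re (z - z')\<bar> < 1" by (simp add: abs_mult)
  then have "\<bar>Re (z - z')\<bar> < 1 / real m" using mp by (simp add: field_simps)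
  moreover
  have "\<bar>real m * (Im z - Im z')\<bar> < 1" using h2 by (simp add: right_diff_distrib)
  then have "real m * \<bar>Im (z - z')\<bar> < 1" by (simp add: abs_mult)
  then have "\<bar>Im (z - z')\<bar> < 1 / real m" using mp by (simp add: field_simps)
  ultimately have "\<bar>Re (z - z')\<bar> + \<bar>Im (z - z')\<bar> < 2 / real m" by simp
  then show ?thesis using cmod_le[of "z - z'"] by linarith
qed

lemma cell_range:
  assumes "cmod z \<le> 1"
  shows "cell m z \<in> {-int m..int m} \<times> {-int m..int m}"
proof -
  have r: "\<bar>Re z\<bar> \<le> 1" and i: "\<bar>Im z\<bar> \<le> 1" using assms abs_Re_le_cmod abs_Im_le_cmod by (blast intro: order_trans)+
  have "\<bar>real m * Re z\<bar> \<le> real m" using r by (simp add: abs_mult mult_left_le)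
  moreover have "\<bar>real m * Im z\<bar> \<le> real m" using i by (simp add: abs_mult mult_left_le)
  ultimately show ?thesis unfolding cell_def
    by (auto simp: abs_le_iff le_floor_iff floor_le_iff)
qed

lemma dvd_cancel_pos:
  fixes d x y :: nat
  assumes d: "0 < d" and h: "x*d dvd y*d"
  shows "x dvd y"
proof -
  obtain k where "y*d = x*d*k" using h by (auto elim: dvdE)
  then have "y*d = (x*k)*d" by (simp add: mult_ac)
  then have "y = x*k" using d by simp
  then show ?thesis by simp
qed

lemma pair_arith:
  fixes a b c c' w :: nat
  assumes b2: "b \<ge> 2" and a: "a = b*(b-1)" and C: "bcl b C" and cC: "c \<in> C" "c' \<in> C"
    and cc: "c < c'" and w: "w \<ge> 1"
  defines "q \<equiv> c div (c' - c)"
  shows "q \<ge> 1" "q * c' = (q+1) * c" "c*a*w \<ge> 2" "c'*a*w \<ge> 2"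
    "a * ((q*(c'*a*w - 1) - b) div a) + b = q*(c'*a*w - 1)"
    "(q*(c'*a*w - 1) - b) div a \<ge> 1"
    "q*(c'*a*w - 1) - 1 = (q+1)*(c*a*w - 1)"
    "(q*(c'*a*w - 1) - b) div a \<le> c*c'*a*w"
proof -
  define d where "d = c' - c"
  have d0: "d > 0" using cc by (simp add: d_def)
  have c0: "c > 0" using C cC unfolding bcl_def by blast
  have h12: "b*(c'-c) dvd c \<and> (b-1)*(c'-c) dvd c'" using C cC cc unfolding bcl_def by blast
  then have h1: "b*d dvd c" and h2: "(b-1)*d dvd c'" by (simp_all add: d_def)
  have "d dvd c" using h1 by (metis dvd_mult_right)
  then have cq: "c = q*d" by (simp add: q_def d_def[symmetric])
  have "c' = c + d" using cc by (simp add: d_def)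
  then have c'q: "c' = (q+1)*d" using cq by simp
  show q1: "q \<ge> 1" using cq c0 by (cases q) auto
  show qc: "q * c' = (q+1) * c" by (simp add: cq c'q algebra_simps)
  have "b*(b-1) \<ge> 2*1" using b2 by (intro mult_le_mono) auto
  then have a2: "a \<ge> 2" using a by simp
  have c1: "c \<ge> 1" using c0 by simp
  have c'2: "c' \<ge> 2" using c0 cc by simp
  have "a*w \<ge> a*1" using w by (intro mult_le_mono) auto
  then have aw': "a*w \<ge> a" by simp
  then have aw: "a*w \<ge> 2" using a2 by linarith
  have "c*(a*w) \<ge> 1*2" using c1 aw by (intro mult_le_mono)
  then show caw: "c*a*w \<ge> 2" by (simp add: mult.assoc)
  have "c'*(a*w) \<ge> 2*a" using c'2 aw' by (intro mult_le_mono)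
  then have c'aw: "c'*a*w \<ge> 2*a" by (simp add: mult.assoc)
  then show "c'*a*w \<ge> 2" using a2 by linarith
  from h1 have "b*d dvd q*d" by (simp only: cq)
  then have bq: "b dvd q" by (rule dvd_cancel_pos[OF d0])
  from h2 have "(b-1)*d dvd (q+1)*d" by (simp only: c'q)
  then have bq1: "(b-1) dvd (q+1)" by (rule dvd_cancel_pos[OF d0])
  have qb: "q \<ge> b" using bq q1 by (simp add: dvd_imp_le)
  define u where "u = q*(c'*a*w - 1)"
  obtain x where x: "c'*a*w = Suc x" using c'aw a2 by (cases "c'*a*w") auto
  have "u + q = q*(c'*a*w)" unfolding u_def x by simp
  then have uq: "u + q = a*(q*c'*w)" by (simp add: mult_ac)
  have "c'*a*w - 1 \<ge> a + 1" using c'aw a2 by linarith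
  then have "u \<ge> b*(a+1)" unfolding u_def using qb by (intro mult_le_mono) simp_all
  moreover have "b*a \<ge> 1*a" using b2 by (intro mult_le_mono) auto
  moreover have "b*(a+1) = b*a + b" by simp
  ultimately have ub: "u \<ge> a + b" by linarith
  have "b dvd q + b" using bq by simp
  moreover have "(b-1) dvd q + b"
  proof -
    have "(b-1) dvd (q+1) + (b-1)" by (rule dvd_add[OF bq1 dvd_refl])
    moreover have "(q+1) + (b-1) = q + b" using b2 by simp
    ultimately show ?thesis by metis
  qed
  moreover have "coprime b (b-1)"
  proof -
    have "coprime (b-1+1) (b-1)" by simp
    then show ?thesis using b2 by simp
  qed
  ultimately have aqb: "a dvd q + b" unfolding a by (simp add: divides_mult)
  have "(u - b) + (q + b) = a*(q*c'*w)" using uq ub by simp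
  then have "a dvd (u - b) + (q + b)" by simp
  then have adv: "a dvd u - b" using aqb by (simp add: dvd_add_left_iff)
  show "a * ((q*(c'*a*w - 1) - b) div a) + b = q*(c'*a*w - 1)"
    unfolding u_def[symmetric] using adv ub by simp
  show "(q*(c'*a*w - 1) - b) div a \<ge> 1"
    unfolding u_def[symmetric]
  proof -
    have "a div a \<le> (u - b) div a" using ub by (intro div_le_mono) linarith
    then show "(u - b) div a \<ge> 1" using a2 by simp
  qed
  have "u + q = (q*c')*(a*w)" using uq by (simp add: mult_ac)
  also have "\<dots> = ((q+1)*c)*(a*w)" by (simp only: qc)
  also have "\<dots> = (q+1)*(c*a*w)" by (simp only: mult_ac)
  also have "\<dots> = (q+1)*(c*a*w - 1) + q + 1"
  proof -
    obtain y where y: "c*a*w = Suc y" using caw by (cases "c*a*w") auto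
    show ?thesis unfolding y by simp
  qed
  finally have "u + q = (q+1)*(c*a*w - 1) + q + 1" .
  then show "q*(c'*a*w - 1) - 1 = (q+1)*(c*a*w - 1)" unfolding u_def[symmetric] by simp
  have "q \<le> c" using cq d0 by simp
  have "(u - b) div a \<le> u" by (meson diff_le_self div_le_dividend le_trans)
  also have "u \<le> a*(q*c'*w)" using uq by linarith
  also have "\<dots> \<le> a*(c*c'*w)" using \<open>q \<le> c\<close> by simp
  finally show "(q*(c'*a*w - 1) - b) div a \<le> c*c'*a*w" unfolding u_def[symmetric] by (simp add: mult_ac)
qed


theorem proposition5p1:
  fixes r a b :: nat and \<epsilon> :: real and f :: "nat \<Rightarrow> nat \<Rightarrow> complex"
  assumes "r \<ge> 1" and "b \<ge> 2" and "a = b * (b - 1)"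
    and "\<epsilon> > 0"
    and "\<And>j. j \<in> {1..r} \<Longrightarrow> cm_unit (f j)"
  shows "lower_density {n. n \<ge> 1 \<and> (\<forall>j\<in>{1..r}. cmod (f j (a*n+b) - f j (a*n+b-1)) < \<epsilon>)} > 0"
proof -
  note b2 = assms(2) and a = assms(3) and eps = assms(4) and fcm = assms(5)
  define Good where "Good = {n. n \<ge> 1 \<and> (\<forall>j\<in>{1..r}. cmod (f j (a*n+b) - f j (a*n+b-1)) < \<epsilon>)}"
  have "b*(b-1) \<ge> 2*1" using b2 by (intro mult_le_mono) auto
  then have a2: "a \<ge> 2" using a by simp
  define m :: nat where "m = nat \<lceil>2/\<epsilon>\<rceil> + 1"
  have m0: "m > 0" by (simp add: m_def)
  have "2/\<epsilon> \<le> real (nat \<lceil>2/\<epsilon>\<rceil>)" by (rule real_nat_ceiling_ge)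
  then have "2/\<epsilon> < real m" by (simp add: m_def)
  then have "2 < \<epsilon> * real m" using eps by (simp add: field_simps)
  then have meps: "2 / real m < \<epsilon>" using m0 by (simp add: field_simps)
  define Box where "Box = {-int m..int m} \<times> {-int m..int m}"
  define Cod where "Cod = {xs. set xs \<subseteq> Box \<and> length xs = r}"
  have finCod: "finite Cod" unfolding Cod_def Box_def by (intro finite_lists_length_eq) simp
  define K where "K = card Cod"
  obtain C where C: "bcl b C" and cardC: "card C = Suc K" using clique_exists[OF b2] by blast
  have finC: "finite C" and posC: "\<forall>x\<in>C. 0 < x" using C unfolding bcl_def by blast+
  define G where "G = (\<lambda>j n. f j n / f j (n - 1))"
  define key where "key = (\<lambda>w c. map (\<lambda>j. cell m (G j (c*a*w))) [1..<Suc r])"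
  have Gnorm: "cmod (G j n) = 1" if "j \<in> {1..r}" "n \<ge> 2" for j n
    using cm_norm[OF fcm[OF that(1)], of n] cm_norm[OF fcm[OF that(1)], of "n-1"] that(2)
    by (simp add: G_def norm_divide)
  have caw2: "c*a*w \<ge> 2" if "c \<in> C" "w \<ge> 1" for c w
  proof -
    have "c \<ge> 1" using posC that by auto
    moreover have "a*w \<ge> 2*1" using a2 that by (intro mult_le_mono) auto
    ultimately have "c*(a*w) \<ge> 1*2" by (intro mult_le_mono) auto
    then show ?thesis by (simp add: mult.assoc)
  qed
  have keyCod: "key w c \<in> Cod" if "w \<ge> 1" "c \<in> C" for w c
  proof -
    have "set (key w c) \<subseteq> Box"
    proof
      fix x assume "x \<in> set (key w c)"
      then obtain j where j0: "j \<in> set [1..<Suc r]" and x: "x = cell m (G j (c*a*w))"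
        unfolding key_def set_map by blast
      have j: "j \<in> {1..r}" using j0 by auto
      have "cmod (G j (c*a*w)) \<le> 1" using Gnorm[OF j caw2[OF that(2) that(1)]] by simp
      then show "x \<in> Box" unfolding x Box_def by (rule cell_range)
    qed
    moreover have "length (key w c) = r" by (simp add: key_def)
    ultimately show ?thesis by (simp add: Cod_def)
  qed
  have ex_pair: "\<exists>p. fst p \<in> C \<and> snd p \<in> C \<and> fst p < snd p \<and> key w (fst p) = key w (snd p)"
    if w: "w \<ge> 1" for w
  proof -
    have "key w ` C \<subseteq> Cod" using keyCod w by auto
    then have "card (key w ` C) \<le> K" unfolding K_def using finCod by (rule card_mono[rotated])
    then have "card (key w ` C) < card C" using cardC by simp
    then have "\<not> inj_on (key w) C" by (rule pigeonhole)
    then obtain x y where xy: "x \<in> C" "y \<in> C" "x \<noteq> y" "key w x = key w y"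
      unfolding inj_on_def by blast
    show ?thesis
    proof (cases "x < y")
      case True
      then show ?thesis using xy by (intro exI[of _ "(x,y)"]) simp
    next
      case False
      then have "y < x" using xy(3) by simp
      then show ?thesis using xy by (intro exI[of _ "(y,x)"]) simp
    qed
  qed
  define pc where "pc = (\<lambda>w. SOME p. fst p \<in> C \<and> snd p \<in> C \<and> fst p < snd p \<and> key w (fst p) = key w (snd p))"
  have pc: "fst (pc w) \<in> C \<and> snd (pc w) \<in> C \<and> fst (pc w) < snd (pc w) \<and> key w (fst (pc w)) = key w (snd (pc w))"
    if "w \<ge> 1" for w
    unfolding pc_def using ex_pair[OF that] by (rule someI_ex)
  define nn where "nn = (\<lambda>(p::nat\<times>nat) (w::nat). ((fst p div (snd p - fst p))*(snd p*a*w - 1) - b) div a)"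
  have good: "nn (c,c') w \<in> Good"
    if cC: "c \<in> C" "c' \<in> C" and cc: "c < c'" and w: "w \<ge> 1" and k: "key w c = key w c'" for c c' w
  proof -
    define q where "q = c div (c' - c)"
    note PA = pair_arith[OF b2 a C cC cc w, folded q_def]
    define n where "n = nn (c,c') w"
    have n_eq: "n = ((q*(c'*a*w - 1)) - b) div a" by (simp add: n_def nn_def q_def)
    have n1: "n \<ge> 1" using PA(6) n_eq by simp
    have an: "a*n+b = q*(c'*a*w - 1)" using PA(5) n_eq by simp
    have an1: "a*n+b-1 = (q+1)*(c*a*w - 1)" using an PA(7) by simp
    have rel: "q * (c'*a*w) = (q+1) * (c*a*w)" using PA(2) by (metis mult.assoc)
    have "\<forall>j\<in>{1..r}. cmod (f j (a*n+b) - f j (a*n+b-1)) < \<epsilon>"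
    proof
      fix j assume j: "j \<in> {1..r}"
      have "cmod (f j (a*n+b) - f j (a*n+b-1)) = cmod (G j (c*a*w) - G j (c'*a*w))"
        unfolding an1 unfolding an G_def by (rule key_identity[OF fcm[OF j] PA(1) PA(3) PA(4) rel])
      also have "\<dots> < 2 / real m"
      proof (rule cell_close[OF m0])
        have jl: "j - 1 < length [1..<Suc r]" using j by auto
        have jn: "[1..<Suc r] ! (j-1) = j" using j by (simp del: upt_Suc add: nth_upt)
        have "key w c ! (j-1) = key w c' ! (j-1)" using k by simp
        moreover have "key w c ! (j-1) = cell m (G j (c*a*w))"
          unfolding key_def nth_map[OF jl] jn by (rule refl)
        moreover have "key w c' ! (j-1) = cell m (G j (c'*a*w))"
          unfolding key_def nth_map[OF jl] jn by (rule refl)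
        ultimately show "cell m (G j (c*a*w)) = cell m (G j (c'*a*w))" by simp
      qed
      also have "\<dots> < \<epsilon>" by (rule meps)
      finally show "cmod (f j (a*n+b) - f j (a*n+b-1)) < \<epsilon>" .
    qed
    then show ?thesis using n1 by (simp add: Good_def n_def[symmetric])
  qed
  define B where "B = (Max C)^2 * a"
  have bound: "nn (c,c') w \<le> B*w"
    if cC: "c \<in> C" "c' \<in> C" and cc: "c < c'" and w: "w \<ge> 1" for c c' w
  proof -
    define q where "q = c div (c' - c)"
    note PA = pair_arith[OF b2 a C cC cc w, folded q_def]
    have "nn (c,c') w \<le> c*c'*a*w" using PA(8) by (simp add: nn_def q_def)
    also have "\<dots> \<le> Max C * Max C * a * w" using cC finC
      by (intro mult_le_mono mult_le_mono1 mult_le_mono2) (auto intro: Max_ge)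
    finally show ?thesis by (simp add: B_def power2_eq_square mult_ac)
  qed
  have B1: "B \<ge> 1"
  proof -
    have "C \<noteq> {}" using cardC by auto
    then have "Max C \<in> C" using finC by simp
    then have "Max C \<ge> 1" using posC by auto
    then have "(Max C)^2 \<ge> 1" by simp
    then show ?thesis using a2 unfolding B_def by (metis mult_le_mono one_le_numeral le_trans mult_1 order_refl)
  qed
  have inj: "nn (c,c') w = nn (c,c') w' \<Longrightarrow> w = w'"
    if cC: "c \<in> C" "c' \<in> C" and cc: "c < c'" and w: "w \<ge> 1" "w' \<ge> 1" for c c' w w'
  proof -
    assume e: "nn (c,c') w = nn (c,c') w'"
    define q where "q = c div (c' - c)"
    note PA = pair_arith[OF b2 a C cC cc w(1), folded q_def]
    note PA' = pair_arith[OF b2 a C cC cc w(2), folded q_def]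
    have "q*(c'*a*w - 1) = q*(c'*a*w' - 1)"
      using PA(5) PA'(5) e by (simp add: nn_def q_def) (metis)
    then have "c'*a*w - 1 = c'*a*w' - 1" using PA(1) by simp
    then have "c'*a*w = c'*a*w'" using PA(4) PA'(4) by linarith
    moreover have "c'*a > 0" using posC cC a2 by auto
    ultimately show "w = w'" by (simp add: mult.assoc)
  qed
  define S where "S = Suc K"
  have count: "N div B \<le> S^2 * card (Good \<inter> {1..N})" for N
  proof -
    define W0 where "W0 = N div B"
    define F where "F = (\<lambda>w. nn (pc w) w)"
    define Sub where "Sub = (\<lambda>p. {w\<in>{1..W0}. pc w = p})"
    have FG: "F w \<in> Good \<inter> {1..N}" if w: "w \<in> {1..W0}" for w
    proof -
      have w1: "w \<ge> 1" using w by simp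
      note P = pc[OF w1]
      have eqp: "pc w = (fst (pc w), snd (pc w))" by simp
      have g: "F w \<in> Good" unfolding F_def using good[of "fst (pc w)" "snd (pc w)" w] P w1
        by (metis eqp)
      then have f1: "F w \<ge> 1" by (simp add: Good_def)
      have f2: "F w \<le> B*w" unfolding F_def using bound[of "fst (pc w)" "snd (pc w)" w] P w1
        by (metis eqp)
      have f3: "B*w \<le> B*W0" using w by (intro mult_le_mono2) simp
      have f4: "B*W0 \<le> N" unfolding W0_def by (simp add: mult.commute)
      have "F w \<le> N" using f2 f3 f4 by linarith
      then show ?thesis using g f1 by simp
    qed
    have sub: "card (Sub p) \<le> card (Good \<inter> {1..N})" for p
    proof -
      have "inj_on F (Sub p)"
      proof (rule inj_onI)
        fix w w' assume w: "w \<in> Sub p" and w': "w' \<in> Sub p" and e: "F w = F w'"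
        have w1: "w \<ge> 1" and w1': "w' \<ge> 1" using w w' by (auto simp: Sub_def)
        have pw: "pc w = p" and pw': "pc w' = p" using w w' by (auto simp: Sub_def)
        note P = pc[OF w1]
        have "nn (fst p, snd p) w = nn (fst p, snd p) w'" using e pw pw' by (simp add: F_def)
        then show "w = w'" using inj[of "fst p" "snd p" w w'] P pw w1 w1' by simp
      qed
      then have "card (Sub p) = card (F ` Sub p)" by (simp add: card_image)
      also have "\<dots> \<le> card (Good \<inter> {1..N})"
      proof (rule card_mono)
        show "F ` Sub p \<subseteq> Good \<inter> {1..N}"
        proof
          fix x assume "x \<in> F ` Sub p"
          then obtain w where "w \<in> Sub p" "x = F w" by blast
          then have "w \<in> {1..W0}" by (simp add: Sub_def)
          then show "x \<in> Good \<inter> {1..N}" using FG \<open>x = F w\<close> by blast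
        qed
      qed simp
      finally show ?thesis .
    qed
    have "{1..W0} \<subseteq> (\<Union>p\<in>C\<times>C. Sub p)"
    proof
      fix w assume w: "w \<in> {1..W0}"
      then have "pc w \<in> C\<times>C" using pc[of w] by (cases "pc w") auto
      then show "w \<in> (\<Union>p\<in>C\<times>C. Sub p)" using w by (auto simp: Sub_def)
    qed
    then have "card {1..W0} \<le> card (\<Union>p\<in>C\<times>C. Sub p)"
    proof (rule card_mono[rotated])
      show "finite (\<Union>p\<in>C\<times>C. Sub p)" using finC by (intro finite_UN_I) (simp_all add: Sub_def)
    qed
    also have "\<dots> \<le> (\<Sum>p\<in>C\<times>C. card (Sub p))" using finC by (intro card_UN_le) simp
    also have "\<dots> \<le> (\<Sum>p\<in>C\<times>C. card (Good \<inter> {1..N}))" by (intro sum_mono sub)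
    also have "\<dots> = S^2 * card (Good \<inter> {1..N})" using cardC by (simp add: card_cartesian_product S_def power2_eq_square)
    finally show ?thesis by (simp add: W0_def)
  qed
  define \<delta> where "\<delta> = 1 / (2 * real B * real (S^2))"
  have S1: "real (S^2) \<ge> 1" by (simp add: S_def)
  have "real B \<ge> 1" using B1 by simp
  then have dp: "2 * real B * real (S^2) > 0" using S1 by (intro mult_pos_pos) (auto simp: S_def)
  then have \<delta>0: "\<delta> > 0" by (simp add: \<delta>_def)
  have ev: "\<forall>\<^sub>F N in sequentially. ereal \<delta> \<le> ereal (real (card (Good \<inter> {1..N})) / real N)"
    unfolding eventually_sequentially
  proof (intro exI[of _ "2*B"] allI impI)
    fix N assume N: "N \<ge> 2*B"
    define D where "D = card (Good \<inter> {1..N})"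
    have NB: "real N = real (N div B) * real B + real (N mod B)"
      by (metis div_mult_mod_eq of_nat_add of_nat_mult)
    have "N mod B < B" using B1 by simp
    then have "real (N mod B) \<le> real B" by simp
    have h2: "real (N div B) \<le> real (S^2) * real D" using count[of N] unfolding D_def
      by (metis of_nat_le_iff of_nat_mult)
    have "real B * real (N div B) \<le> real B * (real (S^2) * real D)"
      using h2 by (intro mult_left_mono) auto
    moreover have "real N \<ge> 2 * real B" using N by (metis of_nat_le_iff of_nat_mult of_nat_numeral)
    ultimately have key1: "real N \<le> 2 * (real B * real (S^2) * real D)"
      using NB \<open>real (N mod B) \<le> real B\<close> by (simp add: algebra_simps)
    have Npos: "real N > 0" using N B1 by simp
    have "real N / (2 * real B * real (S^2)) \<le> real D"
      using key1 dp by (simp add: divide_le_eq algebra_simps)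
    then have "\<delta> * real N \<le> real D" by (simp add: \<delta>_def)
    then have "\<delta> \<le> real D / real N" using Npos by (simp add: le_divide_eq)
    then show "ereal \<delta> \<le> ereal (real (card (Good \<inter> {1..N})) / real N)" by (simp add: D_def)
  qed
  have l1: "ereal \<delta> \<le> liminf (\<lambda>N. ereal (real (card (Good \<inter> {1..N})) / real N))"
    by (rule Liminf_bounded[OF ev])
  have ev2: "\<forall>\<^sub>F N in sequentially. ereal (real (card (Good \<inter> {1..N})) / real N) \<le> 1"
  proof (rule always_eventually, rule allI)
    fix N :: nat
    have "card (Good \<inter> {1..N}) \<le> card {1..N}" by (rule card_mono) auto
    then have "real (card (Good \<inter> {1..N})) \<le> real N" by simp
    then show "ereal (real (card (Good \<inter> {1..N})) / real N) \<le> 1"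
      by (cases "N = 0") (auto simp: divide_le_eq)
  qed
  have l2: "liminf (\<lambda>N. ereal (real (card (Good \<inter> {1..N})) / real N)) \<le> 1"
    by (rule Liminf_le[OF sequentially_bot ev2])
  have "\<delta> \<le> lower_density Good"
    unfolding lower_density_def using l1 l2
    by (cases "liminf (\<lambda>N. ereal (real (card (Good \<inter> {1..N})) / real N))") auto
  then show ?thesis using \<delta>0 unfolding Good_def by simp
qed

end
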